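(* For every $m$, the first $\varepsilon\tau$-theorem holds for $\varepsilon\tau(\mathbf{LC}_m)$.
   Context: $\mathbf{LC}_m$ is the intermediate propositional logic axiomatized over intuitionistic propositional logic by the schemas $\mathit{Lin}$: $(A\to B)\lor(B\to A)$ and $B_m$: $(A_1\to A_2)\lor(A_2\to A_3)\lor\dots\lor(A_m\to A_{m+1})$ (the $m$-valued Gödel logic). $\varepsilon\tau$-terms: $\varepsilon x\,A(x)$, $\tau x\,A(x)$ for formulas $A(x)$. Critical formulas: $A(t)\to A(\varepsilon x\,A(x))$ and $A(\tau x\,A(x))\to A(t)$. $\vdash_{\varepsilon\tau(\mathbf{L})}B$: $B$ derivable in the quantifier-free language with $\varepsilon\tau$-terms from critical formulas using substitution instances of theorems of $\mathbf{L}$ and modus ponens; $\vdash_{\mathbf{L}}$ is the same without critical formulas. $\varepsilon\tau(\mathbf{L})$ has the first $\varepsilon\tau$-theorem if whenever $\vdash_{\varepsilon\tau(\mathbf{L})}A(e_1,\dots,e_n)$ for $\varepsilon$- or $\tau$-terms $e_i$, there are $\varepsilon\tau$-free terms $t_i^j$ with $\vdash_{\mathbf{L}}A(t_1^1,\dots,t_n^1)\lor\dots\lor A(t_1^k,\dots,t_n^k)$. *)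

theory Defs
  imports Main
begin

text \<open>Free variables are FVar x (x a natural number); bound variables are de Bruijn
  indices BVar i; Eps A and Tau A bind BVar 0 in A. Function symbols 'f (constants
  are 0-ary), predicate symbols 'p.\<close>

datatype ('f, 'p) tm =
    FVar nat
  | BVar nat
  | Fn 'f "('f, 'p) tm list"
  | Eps "('f, 'p) fm"
  | Tau "('f, 'p) fm"
and ('f, 'p) fm =
    Bot
  | Atom 'p "('f, 'p) tm list"
  | And "('f, 'p) fm" "('f, 'p) fm"
  | Or "('f, 'p) fm" "('f, 'p) fm"
  | Imp "('f, 'p) fm" "('f, 'p) fm"

primrec inst_tm :: "nat \<Rightarrow> ('f, 'p) tm \<Rightarrow> ('f, 'p) tm \<Rightarrow> ('f, 'p) tm"
  and inst_fm :: "nat \<Rightarrow> ('f, 'p) tm \<Rightarrow> ('f, 'p) fm \<Rightarrow> ('f, 'p) fm" where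
  "inst_tm k u (FVar x) = FVar x"
| "inst_tm k u (BVar i) = (if i = k then u else BVar i)"
| "inst_tm k u (Fn f ts) = Fn f (map (inst_tm k u) ts)"
| "inst_tm k u (Eps A) = Eps (inst_fm (Suc k) u A)"
| "inst_tm k u (Tau A) = Tau (inst_fm (Suc k) u A)"
| "inst_fm k u Bot = Bot"
| "inst_fm k u (Atom p ts) = Atom p (map (inst_tm k u) ts)"
| "inst_fm k u (And A B) = And (inst_fm k u A) (inst_fm k u B)"
| "inst_fm k u (Or A B) = Or (inst_fm k u A) (inst_fm k u B)"
| "inst_fm k u (Imp A B) = Imp (inst_fm k u A) (inst_fm k u B)"

text \<open>closed_tm k t: all bound indices in t refer to one of k enclosing binders.
  closed_tm 0 t means t is a well-formed (locally closed) term.\<close>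
primrec closed_tm :: "nat \<Rightarrow> ('f, 'p) tm \<Rightarrow> bool"
  and closed_fm :: "nat \<Rightarrow> ('f, 'p) fm \<Rightarrow> bool" where
  "closed_tm k (FVar x) = True"
| "closed_tm k (BVar i) = (i < k)"
| "closed_tm k (Fn f ts) = list_all (closed_tm k) ts"
| "closed_tm k (Eps A) = closed_fm (Suc k) A"
| "closed_tm k (Tau A) = closed_fm (Suc k) A"
| "closed_fm k Bot = True"
| "closed_fm k (Atom p ts) = list_all (closed_tm k) ts"
| "closed_fm k (And A B) = (closed_fm k A \<and> closed_fm k B)"
| "closed_fm k (Or A B) = (closed_fm k A \<and> closed_fm k B)"
| "closed_fm k (Imp A B) = (closed_fm k A \<and> closed_fm k B)"

primrec etfree_tm :: "('f, 'p) tm \<Rightarrow> bool"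
  and etfree_fm :: "('f, 'p) fm \<Rightarrow> bool" where
  "etfree_tm (FVar x) = True"
| "etfree_tm (BVar i) = True"
| "etfree_tm (Fn f ts) = list_all etfree_tm ts"
| "etfree_tm (Eps A) = False"
| "etfree_tm (Tau A) = False"
| "etfree_fm Bot = True"
| "etfree_fm (Atom p ts) = list_all etfree_tm ts"
| "etfree_fm (And A B) = (etfree_fm A \<and> etfree_fm B)"
| "etfree_fm (Or A B) = (etfree_fm A \<and> etfree_fm B)"
| "etfree_fm (Imp A B) = (etfree_fm A \<and> etfree_fm B)"

primrec subst_tm :: "(nat \<Rightarrow> ('f, 'p) tm) \<Rightarrow> ('f, 'p) tm \<Rightarrow> ('f, 'p) tm"
  and subst_fm :: "(nat \<Rightarrow> ('f, 'p) tm) \<Rightarrow> ('f, 'p) fm \<Rightarrow> ('f, 'p) fm" where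
  "subst_tm \<sigma> (FVar x) = \<sigma> x"
| "subst_tm \<sigma> (BVar i) = BVar i"
| "subst_tm \<sigma> (Fn f ts) = Fn f (map (subst_tm \<sigma>) ts)"
| "subst_tm \<sigma> (Eps A) = Eps (subst_fm \<sigma> A)"
| "subst_tm \<sigma> (Tau A) = Tau (subst_fm \<sigma> A)"
| "subst_fm \<sigma> Bot = Bot"
| "subst_fm \<sigma> (Atom p ts) = Atom p (map (subst_tm \<sigma>) ts)"
| "subst_fm \<sigma> (And A B) = And (subst_fm \<sigma> A) (subst_fm \<sigma> B)"
| "subst_fm \<sigma> (Or A B) = Or (subst_fm \<sigma> A) (subst_fm \<sigma> B)"
| "subst_fm \<sigma> (Imp A B) = Imp (subst_fm \<sigma> A) (subst_fm \<sigma> B)"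

text \<open>A(t_1,...,t_n): replace the free variables xs (pairwise distinct) by the terms ts.\<close>
definition subst_list :: "nat list \<Rightarrow> ('f, 'p) tm list \<Rightarrow> nat \<Rightarrow> ('f, 'p) tm" where
  "subst_list xs ts = (\<lambda>x. case map_of (zip xs ts) x of Some t \<Rightarrow> t | None \<Rightarrow> FVar x)"

fun bigOr :: "('f, 'p) fm list \<Rightarrow> ('f, 'p) fm" where
  "bigOr [] = Bot"
| "bigOr [A] = A"
| "bigOr (A # B # Bs) = Or A (bigOr (B # Bs))"

datatype pf = PV nat | PBot | PAnd pf pf | POr pf pf | PImp pf pf

fun pbigOr :: "pf list \<Rightarrow> pf" where
  "pbigOr [] = PBot"
| "pbigOr [A] = A"
| "pbigOr (A # B # Bs) = POr A (pbigOr (B # Bs))"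

text \<open>Theorems of LC_m: intuitionistic propositional logic (Hilbert-style axioms,
  modus ponens) plus the schemas Lin and B_m.\<close>
inductive LC :: "nat \<Rightarrow> pf \<Rightarrow> bool" for m :: nat where
  ax1: "LC m (PImp A (PImp B A))"
| ax2: "LC m (PImp (PImp A (PImp B C)) (PImp (PImp A B) (PImp A C)))"
| ax3: "LC m (PImp (PAnd A B) A)"
| ax4: "LC m (PImp (PAnd A B) B)"
| ax5: "LC m (PImp A (PImp B (PAnd A B)))"
| ax6: "LC m (PImp A (POr A B))"
| ax7: "LC m (PImp B (POr A B))"
| ax8: "LC m (PImp (PImp A C) (PImp (PImp B C) (PImp (POr A B) C)))"
| ax9: "LC m (PImp PBot A)"
| lin: "LC m (POr (PImp A B) (PImp B A))"
| bm: "length As = Suc m \<Longrightarrow>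
       LC m (pbigOr (map (\<lambda>i. PImp (As ! i) (As ! Suc i)) [0..<m]))"
| mp: "LC m (PImp A B) \<Longrightarrow> LC m A \<Longrightarrow> LC m B"

primrec psub :: "(nat \<Rightarrow> ('f, 'p) fm) \<Rightarrow> pf \<Rightarrow> ('f, 'p) fm" where
  "psub \<sigma> (PV n) = \<sigma> n"
| "psub \<sigma> PBot = Bot"
| "psub \<sigma> (PAnd A B) = And (psub \<sigma> A) (psub \<sigma> B)"
| "psub \<sigma> (POr A B) = Or (psub \<sigma> A) (psub \<sigma> B)"
| "psub \<sigma> (PImp A B) = Imp (psub \<sigma> A) (psub \<sigma> B)"

inductive deriv :: "bool \<Rightarrow> nat \<Rightarrow> ('f, 'p) fm \<Rightarrow> bool" for crit :: bool and m :: nat where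
  crit_eps: "crit \<Longrightarrow> closed_fm 1 A \<Longrightarrow> closed_tm 0 t \<Longrightarrow>
     deriv crit m (Imp (inst_fm 0 t A) (inst_fm 0 (Eps A) A))"
| crit_tau: "crit \<Longrightarrow> closed_fm 1 A \<Longrightarrow> closed_tm 0 t \<Longrightarrow>
     deriv crit m (Imp (inst_fm 0 (Tau A) A) (inst_fm 0 t A))"
| inst: "LC m \<phi> \<Longrightarrow> (\<forall>n. closed_fm 0 (\<sigma> n)) \<Longrightarrow> deriv crit m (psub \<sigma> \<phi>)"
| mp: "deriv crit m (Imp A B) \<Longrightarrow> deriv crit m A \<Longrightarrow> deriv crit m B"

abbreviation deriv_et :: "nat \<Rightarrow> ('f, 'p) fm \<Rightarrow> bool" where
  "deriv_et m B \<equiv> deriv True m B"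

abbreviation deriv_L :: "nat \<Rightarrow> ('f, 'p) fm \<Rightarrow> bool" where
  "deriv_L m B \<equiv> deriv False m B"

definition is_et_term :: "('f, 'p) tm \<Rightarrow> bool" where
  "is_et_term e \<longleftrightarrow> (\<exists>A. e = Eps A \<or> e = Tau A)"

end

theory Submission
  imports Defs
begin

lemma closed_mono:
  fixes t :: "('f,'p) tm" and F :: "('f,'p) fm"
  shows "\<forall>k k'. closed_tm k t \<longrightarrow> k \<le> k' \<longrightarrow> closed_tm k' t"
  and "\<forall>k k'. closed_fm k F \<longrightarrow> k \<le> k' \<longrightarrow> closed_fm k' F"
  by (induct t and F) (auto simp: list_all_iff)

lemma closed_inst:
  shows "\<forall>k. closed_tm (Suc k) t \<longrightarrow> closed_tm 0 u \<longrightarrow> closed_tm k (inst_tm k u t)"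
  and "\<forall>k. closed_fm (Suc k) F \<longrightarrow> closed_tm 0 u \<longrightarrow> closed_fm k (inst_fm k u F)"
  by (induct t and F) (auto simp: list_all_iff closed_mono)

lemma closed_psub: "(\<forall>n. closed_fm 0 (\<sigma> n)) \<Longrightarrow> closed_fm 0 (psub \<sigma> \<phi>)"
  by (induction \<phi>) auto

lemma deriv_closed: "deriv c m F \<Longrightarrow> closed_fm 0 F"
proof (induction rule: deriv.induct)
  case (crit_eps A t) then show ?case by (simp add: closed_inst)
next
  case (crit_tau A t) then show ?case by (simp add: closed_inst)
next
  case (inst \<phi> \<sigma>) then show ?case by (simp add: closed_psub)
qed auto

definition sg :: "('f, 'p) fm list \<Rightarrow> nat \<Rightarrow> ('f, 'p) fm" where
  "sg Fs n = (if n < length Fs then Fs ! n else Bot)"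

lemma lc_inst: "LC m \<phi> \<Longrightarrow> \<forall>F\<in>set Fs. closed_fm 0 F \<Longrightarrow> deriv c m (psub (sg Fs) \<phi>)"
  by (rule deriv.inst) (auto simp: sg_def)

lemma lc_id: "LC m (PImp A A)"
proof -
  have "LC m (PImp (PImp A (PImp (PImp A A) A)) (PImp (PImp A (PImp A A)) (PImp A A)))"
    by (rule LC.ax2)
  then have "LC m (PImp (PImp A (PImp A A)) (PImp A A))" using LC.mp LC.ax1 by blast
  then show ?thesis using LC.mp LC.ax1 by blast
qed

abbreviation "cl F \<equiv> closed_fm 0 F"

lemma d_id: "cl X \<Longrightarrow> deriv c m (Imp X X)"
  using lc_inst[OF lc_id[of m "PV 0"], of "[X]" c] by (simp add: sg_def)
lemma d_ax1: "cl X \<Longrightarrow> cl Y \<Longrightarrow> deriv c m (Imp X (Imp Y X))"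
  using lc_inst[OF LC.ax1[of m "PV 0" "PV 1"], of "[X,Y]" c] by (simp add: sg_def)
lemma d_ax2: "cl X \<Longrightarrow> cl Y \<Longrightarrow> cl Z \<Longrightarrow> deriv c m (Imp (Imp X (Imp Y Z)) (Imp (Imp X Y) (Imp X Z)))"
  using lc_inst[OF LC.ax2[of m "PV 0" "PV 1" "PV 2"], of "[X,Y,Z]" c] by (simp add: sg_def)
lemma d_ax3: "cl X \<Longrightarrow> cl Y \<Longrightarrow> deriv c m (Imp (And X Y) X)"
  using lc_inst[OF LC.ax3[of m "PV 0" "PV 1"], of "[X,Y]" c] by (simp add: sg_def)
lemma d_ax4: "cl X \<Longrightarrow> cl Y \<Longrightarrow> deriv c m (Imp (And X Y) Y)"
  using lc_inst[OF LC.ax4[of m "PV 0" "PV 1"], of "[X,Y]" c] by (simp add: sg_def)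
lemma d_ax5: "cl X \<Longrightarrow> cl Y \<Longrightarrow> deriv c m (Imp X (Imp Y (And X Y)))"
  using lc_inst[OF LC.ax5[of m "PV 0" "PV 1"], of "[X,Y]" c] by (simp add: sg_def)
lemma d_ax6: "cl X \<Longrightarrow> cl Y \<Longrightarrow> deriv c m (Imp X (Or X Y))"
  using lc_inst[OF LC.ax6[of m "PV 0" "PV 1"], of "[X,Y]" c] by (simp add: sg_def)
lemma d_ax7: "cl X \<Longrightarrow> cl Y \<Longrightarrow> deriv c m (Imp Y (Or X Y))"
  using lc_inst[OF LC.ax7[where A="PV 0" and B="PV 1"], of "[X,Y]" c] by (simp add: sg_def)
lemma d_ax8: "cl X \<Longrightarrow> cl Y \<Longrightarrow> cl Z \<Longrightarrow> deriv c m (Imp (Imp X Z) (Imp (Imp Y Z) (Imp (Or X Y) Z)))"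
  using lc_inst[OF LC.ax8[where A="PV 0" and B="PV 1" and C="PV 2"], of "[X,Y,Z]" c] by (simp add: sg_def)
lemma d_ax9: "cl X \<Longrightarrow> deriv c m (Imp Bot X)"
  using lc_inst[OF LC.ax9[of m "PV 0"], of "[X]" c] by (simp add: sg_def)
lemma d_lin: "cl X \<Longrightarrow> cl Y \<Longrightarrow> deriv c m (Or (Imp X Y) (Imp Y X))"
  using lc_inst[OF LC.lin[of m "PV 0" "PV 1"], of "[X,Y]" c] by (simp add: sg_def)

lemma psub_pbigOr: "psub \<sigma> (pbigOr l) = bigOr (map (psub \<sigma>) l)"
  by (induction l rule: pbigOr.induct) auto

lemma d_bm: assumes "length Fs = Suc m" "\<forall>F\<in>set Fs. cl F"
  shows "deriv c m (bigOr (map (\<lambda>i. Imp (Fs ! i) (Fs ! Suc i)) [0..<m]))"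
proof -
  have e: "map (\<lambda>i. PImp (map PV [0..<Suc m] ! i) (map PV [0..<Suc m] ! Suc i)) [0..<m]
     = map (\<lambda>i. PImp (PV i) (PV (Suc i))) [0..<m]"
    by (rule map_cong) (auto simp del: upt_Suc)
  have "LC m (pbigOr (map (\<lambda>i. PImp (map PV [0..<Suc m] ! i) (map PV [0..<Suc m] ! Suc i)) [0..<m]))"
    by (rule LC.bm) simp
  then have "LC m (pbigOr (map (\<lambda>i. PImp (PV i) (PV (Suc i))) [0..<m]))" by (simp only: e)
  from lc_inst[OF this assms(2), of c] have
    "deriv c m (bigOr (map (\<lambda>i. Imp (sg Fs i) (sg Fs (Suc i))) [0..<m]))"
    by (simp add: psub_pbigOr comp_def del: upt_Suc)
  moreover have "map (\<lambda>i. Imp (sg Fs i) (sg Fs (Suc i))) [0..<m] = map (\<lambda>i. Imp (Fs ! i) (Fs ! Suc i)) [0..<m]"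
    using assms(1) by (simp add: sg_def)
  ultimately show ?thesis by simp
qed

inductive dH :: "nat \<Rightarrow> ('f, 'p) fm set \<Rightarrow> ('f, 'p) fm \<Rightarrow> bool" for m H where
  hypH: "F \<in> H \<Longrightarrow> dH m H F"
| thmH: "deriv False m F \<Longrightarrow> dH m H F"
| mpH: "dH m H (Imp A B) \<Longrightarrow> dH m H A \<Longrightarrow> dH m H B"

abbreviation "clset H \<equiv> \<forall>F\<in>H. cl F"

lemma dH_closed: "dH m H F \<Longrightarrow> clset H \<Longrightarrow> cl F"
  by (induction rule: dH.induct) (auto dest: deriv_closed)

lemma dH_mono: "dH m H F \<Longrightarrow> H \<subseteq> H' \<Longrightarrow> dH m H' F"
  by (induction rule: dH.induct) (auto intro: dH.intros)

lemma dH_compact: "dH m H F \<Longrightarrow> \<exists>H0. finite H0 \<and> H0 \<subseteq> H \<and> dH m H0 F"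
proof (induction rule: dH.induct)
  case (hypH F) then show ?case by (intro exI[of _ "{F}"]) (auto intro: dH.hypH)
next
  case (thmH F) then show ?case by (intro exI[of _ "{}"]) (auto intro: dH.thmH)
next
  case (mpH A B)
  then obtain H1 H2 where "finite H1" "H1 \<subseteq> H" "dH m H1 (Imp A B)" "finite H2" "H2 \<subseteq> H" "dH m H2 A"
    by blast
  then show ?case
    by (intro exI[of _ "H1 \<union> H2"]) (auto intro: dH.mpH dH_mono)
qed

lemma dH_empty: "dH m {} F \<Longrightarrow> deriv False m F"
  by (induction rule: dH.induct) (auto intro: deriv.mp)

lemma dH_deduct: assumes "dH m (insert A H) B" "cl A" "clset H" shows "dH m H (Imp A B)"
  using assms(1)
proof (induction rule: dH.induct)
  case (hypH F)
  show ?case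
  proof (cases "F = A")
    case True then show ?thesis using assms by (auto intro: dH.thmH d_id)
  next
    case False
    then have "F \<in> H" "cl F" using hypH assms by auto
    then show ?thesis using assms by (meson dH.hypH dH.mpH dH.thmH d_ax1)
  qed
next
  case (thmH F)
  then have "cl F" by (rule deriv_closed)
  then show ?case using thmH assms by (meson dH.mpH dH.thmH d_ax1)
next
  case (mpH C B)
  have cls: "clset (insert A H)" using assms by auto
  have "cl C" "cl B" using dH_closed[OF mpH(1) cls] by auto
  then show ?case using mpH assms by (meson dH.mpH dH.thmH d_ax2)
qed

lemmas dH_ax = dH.thmH[OF d_id] dH.thmH[OF d_ax1] dH.thmH[OF d_ax2] dH.thmH[OF d_ax3] dH.thmH[OF d_ax4]
  dH.thmH[OF d_ax5] dH.thmH[OF d_ax6] dH.thmH[OF d_ax7] dH.thmH[OF d_ax8] dH.thmH[OF d_ax9] dH.thmH[OF d_lin]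

lemma dH_mp2: "dH m H (Imp A (Imp B C)) \<Longrightarrow> dH m H A \<Longrightarrow> dH m H B \<Longrightarrow> dH m H C"
  by (meson dH.mpH)

lemma dH_trans: assumes "dH m H (Imp A B)" "dH m H (Imp B C)" "clset H"
  shows "dH m H (Imp A C)"
proof -
  have c: "cl A" "cl B" "cl C" using dH_closed[OF assms(1) assms(3)] dH_closed[OF assms(2) assms(3)] by auto
  have "dH m (insert A H) C"
    by (meson dH.hypH dH.mpH dH_mono assms(1,2) insertI1 subset_insertI)
  then show ?thesis using dH_deduct c assms(3) by blast
qed

lemma dH_and: assumes "dH m H (Imp Z X)" "dH m H (Imp Z Y)" "clset H"
  shows "dH m H (Imp Z (And X Y))"
proof -
  have c: "cl X" "cl Y" "cl Z" using dH_closed[OF assms(1) assms(3)] dH_closed[OF assms(2) assms(3)] by auto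
  have "dH m (insert Z H) X" "dH m (insert Z H) Y"
    by (meson dH.hypH dH.mpH dH_mono assms(1,2) insertI1 subset_insertI)+
  then have "dH m (insert Z H) (And X Y)" using c dH_ax(6) dH_mp2 by blast
  then show ?thesis using dH_deduct c assms(3) by blast
qed

lemma dH_or: assumes "dH m H (Imp X Z)" "dH m H (Imp Y Z)" "clset H"
  shows "dH m H (Imp (Or X Y) Z)"
proof -
  have c: "cl X" "cl Y" "cl Z" using dH_closed[OF assms(1) assms(3)] dH_closed[OF assms(2) assms(3)] by auto
  show ?thesis using dH_mp2[OF dH_ax(9) assms(1,2)] c by blast
qed

definition gmin :: "('v \<Rightarrow> 'v \<Rightarrow> bool) \<Rightarrow> 'v \<Rightarrow> 'v \<Rightarrow> 'v" where
  "gmin le a b = (if le a b then a else b)"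
definition gmax :: "('v \<Rightarrow> 'v \<Rightarrow> bool) \<Rightarrow> 'v \<Rightarrow> 'v \<Rightarrow> 'v" where
  "gmax le a b = (if le a b then b else a)"
definition gimp :: "('v \<Rightarrow> 'v \<Rightarrow> bool) \<Rightarrow> 'v \<Rightarrow> 'v \<Rightarrow> 'v \<Rightarrow> 'v" where
  "gimp le tp a b = (if le a b then tp else b)"

primrec peval :: "('v \<Rightarrow> 'v \<Rightarrow> bool) \<Rightarrow> 'v \<Rightarrow> 'v \<Rightarrow> (nat \<Rightarrow> 'v) \<Rightarrow> pf \<Rightarrow> 'v" where
  "peval le bt tp \<rho> (PV n) = \<rho> n"
| "peval le bt tp \<rho> PBot = bt"
| "peval le bt tp \<rho> (PAnd A B) = gmin le (peval le bt tp \<rho> A) (peval le bt tp \<rho> B)"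
| "peval le bt tp \<rho> (POr A B) = gmax le (peval le bt tp \<rho> A) (peval le bt tp \<rho> B)"
| "peval le bt tp \<rho> (PImp A B) = gimp le tp (peval le bt tp \<rho> A) (peval le bt tp \<rho> B)"

locale gchain =
  fixes V :: "'v set" and le :: "'v \<Rightarrow> 'v \<Rightarrow> bool" and bt tp :: 'v and m :: nat
  assumes refl: "x \<in> V \<Longrightarrow> le x x"
    and trans: "x \<in> V \<Longrightarrow> y \<in> V \<Longrightarrow> z \<in> V \<Longrightarrow> le x y \<Longrightarrow> le y z \<Longrightarrow> le x z"
    and total: "x \<in> V \<Longrightarrow> y \<in> V \<Longrightarrow> le x y \<or> le y x"
    and btV: "bt \<in> V" and tpV: "tp \<in> V"
    and bt_le: "x \<in> V \<Longrightarrow> le bt x" and le_tp: "x \<in> V \<Longrightarrow> le x tp"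
    and bmp: "length as = Suc m \<Longrightarrow> set as \<subseteq> V \<Longrightarrow> \<exists>i<m. le (as ! i) (as ! Suc i)"
begin

abbreviation "pe \<equiv> peval le bt tp"

lemma peV: "(\<forall>n. \<rho> n \<in> V) \<Longrightarrow> pe \<rho> \<phi> \<in> V"
  by (induction \<phi>) (auto simp: gmin_def gmax_def gimp_def btV tpV)

lemma imp_top: "a \<in> V \<Longrightarrow> b \<in> V \<Longrightarrow> le tp (gimp le tp a b) \<longleftrightarrow> le a b"
proof -
  assume V: "a \<in> V" "b \<in> V"
  show ?thesis
  proof (cases "le a b")
    case True then show ?thesis by (simp add: gimp_def refl tpV)
  next
    case False
    have "le tp b \<Longrightarrow> le a b" using trans[OF V(1) tpV V(2)] le_tp[OF V(1)] by blast
    then show ?thesis using False by (auto simp: gimp_def)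
  qed
qed

lemma max_top: "a \<in> V \<Longrightarrow> b \<in> V \<Longrightarrow> le tp (gmax le a b) \<longleftrightarrow> le tp a \<or> le tp b"
proof -
  assume V: "a \<in> V" "b \<in> V"
  show ?thesis
  proof (cases "le a b")
    case True then show ?thesis using trans[OF tpV V(1) V(2)] by (auto simp: gmax_def)
  next
    case False
    then have "le b a" using total V by blast
    then show ?thesis using False trans[OF tpV V(2) V(1)] by (auto simp: gmax_def)
  qed
qed

lemma min_le: "a \<in> V \<Longrightarrow> b \<in> V \<Longrightarrow> le (gmin le a b) a \<and> le (gmin le a b) b"
proof -
  assume V: "a \<in> V" "b \<in> V"
  then have "le a b \<or> le b a" using total by blast
  then show ?thesis using refl V by (auto simp: gmin_def)
qed

lemma min_ge: "a \<in> V \<Longrightarrow> b \<in> V \<Longrightarrow> c \<in> V \<Longrightarrow> le c a \<Longrightarrow> le c b \<Longrightarrow> le c (gmin le a b)"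
  unfolding gmin_def by simp

lemma max_ge: "a \<in> V \<Longrightarrow> b \<in> V \<Longrightarrow> le a (gmax le a b) \<and> le b (gmax le a b)"
proof -
  assume V: "a \<in> V" "b \<in> V"
  then have "le a b \<or> le b a" using total by blast
  then show ?thesis using refl V by (auto simp: gmax_def)
qed

lemma max_le: "a \<in> V \<Longrightarrow> b \<in> V \<Longrightarrow> c \<in> V \<Longrightarrow> le a c \<Longrightarrow> le b c \<Longrightarrow> le (gmax le a b) c"
  unfolding gmax_def by simp

lemma gimp_V: "a \<in> V \<Longrightarrow> b \<in> V \<Longrightarrow> gimp le tp a b \<in> V"
  unfolding gimp_def using tpV by simp
lemma gmin_V: "a \<in> V \<Longrightarrow> b \<in> V \<Longrightarrow> gmin le a b \<in> V"
  unfolding gmin_def by simp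
lemma gmax_V: "a \<in> V \<Longrightarrow> b \<in> V \<Longrightarrow> gmax le a b \<in> V"
  unfolding gmax_def by simp

lemma pbigOr_top: "(\<forall>n. \<rho> n \<in> V) \<Longrightarrow> i < length l \<Longrightarrow> le tp (pe \<rho> (l ! i)) \<Longrightarrow> le tp (pe \<rho> (pbigOr l))"
proof (induction l arbitrary: i rule: pbigOr.induct)
  case (3 A B Bs)
  then show ?case
    by (cases i) (auto simp: max_top peV)
qed auto

lemma res: "u \<in> V \<Longrightarrow> x \<in> V \<Longrightarrow> y \<in> V \<Longrightarrow> le u (gimp le tp x y) \<longleftrightarrow> le (gmin le u x) y"
proof -
  assume V: "u \<in> V" "x \<in> V" "y \<in> V"
  show ?thesis
  proof (cases "le x y")
    case True
    have "le (gmin le u x) y"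
    proof (cases "le u x")
      case True then show ?thesis using V trans[of u x y] \<open>le x y\<close> by (simp add: gmin_def)
    qed (simp add: gmin_def True)
    then show ?thesis using True V le_tp by (simp add: gimp_def)
  next
    case False
    then have gi: "gimp le tp x y = y" by (simp add: gimp_def)
    show ?thesis
    proof (cases "le u x")
      case True then show ?thesis by (simp add: gi gmin_def)
    next
      case F2: False
      then have "le x u" using total V by blast
      have "\<not> le u y" using False V trans[of x u y] \<open>le x u\<close> by blast
      then show ?thesis using F2 False by (simp add: gi gmin_def)
    qed
  qed
qed

lemma mpc: "w \<in> V \<Longrightarrow> x \<in> V \<Longrightarrow> y \<in> V \<Longrightarrow> le w x \<Longrightarrow> le w (gimp le tp x y) \<Longrightarrow> le w y"
proof -
  assume V: "w \<in> V" "x \<in> V" "y \<in> V" and h: "le w x" "le w (gimp le tp x y)"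
  have 1: "le (gmin le w x) y" using res[OF V] h(2) by blast
  have 2: "le w (gmin le w x)" using min_ge[OF V(1,2,1) refl[OF V(1)] h(1)] by blast
  show "le w y" using trans[OF V(1) gmin_V[OF V(1,2)] V(3) 2 1] .
qed

lemma impI: "w \<in> V \<Longrightarrow> x \<in> V \<Longrightarrow> y \<in> V \<Longrightarrow> le (gmin le w x) y \<Longrightarrow> le w (gimp le tp x y)"
  using res by blast

lemma topI: "x \<in> V \<Longrightarrow> y \<in> V \<Longrightarrow> le x y \<Longrightarrow> le tp (gimp le tp x y)"
  using imp_top by blast

lemma minL: "a \<in> V \<Longrightarrow> b \<in> V \<Longrightarrow> le (gmin le a b) a" using min_le by blast
lemma minR: "a \<in> V \<Longrightarrow> b \<in> V \<Longrightarrow> le (gmin le a b) b" using min_le by blast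

lemma v_ax1: "a \<in> V \<Longrightarrow> b \<in> V \<Longrightarrow> le tp (gimp le tp a (gimp le tp b a))"
  by (intro topI impI minL gimp_V)

lemma v_ax2: assumes V: "a \<in> V" "b \<in> V" "c \<in> V"
  shows "le tp (gimp le tp (gimp le tp a (gimp le tp b c)) (gimp le tp (gimp le tp a b) (gimp le tp a c)))"
proof -
  define P where "P = gimp le tp a (gimp le tp b c)"
  define Q where "Q = gimp le tp a b"
  have PQ: "P \<in> V" "Q \<in> V" using V by (auto simp: P_def Q_def gimp_V)
  define w where "w = gmin le (gmin le P Q) a"
  have wV: "w \<in> V" using V PQ by (simp add: w_def gmin_V)
  have wa: "le w a" using V PQ by (simp add: w_def minR gmin_V)
  have wP: "le w P" using V PQ unfolding w_def by (meson minL gmin_V trans)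
  have wQ: "le w Q" using V PQ unfolding w_def by (meson minL minR gmin_V trans)
  have wb: "le w b" using mpc[OF wV V(1,2) wa] wQ by (simp add: Q_def)
  have wbc: "le w (gimp le tp b c)" using mpc[OF wV V(1) gimp_V[OF V(2,3)] wa] wP by (simp add: P_def)
  have wc: "le w c" using mpc[OF wV V(2,3) wb wbc] .
  have "le P (gimp le tp Q (gimp le tp a c))"
    using wc V PQ unfolding w_def by (intro impI gimp_V gmin_V) auto
  then show ?thesis using PQ V by (intro topI gimp_V) (auto simp: P_def Q_def)
qed

lemma v_ax8: assumes V: "a \<in> V" "b \<in> V" "c \<in> V"
  shows "le tp (gimp le tp (gimp le tp a c) (gimp le tp (gimp le tp b c) (gimp le tp (gmax le a b) c)))"
proof -
  define P where "P = gimp le tp a c"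
  define Q where "Q = gimp le tp b c"
  have PQ: "P \<in> V" "Q \<in> V" using V by (auto simp: P_def Q_def gimp_V)
  define w where "w = gmin le (gmin le P Q) (gmax le a b)"
  have wV: "w \<in> V" using V PQ by (simp add: w_def gmin_V gmax_V)
  have wm: "le w (gmax le a b)" using V PQ by (simp add: w_def minR gmin_V gmax_V)
  have wP: "le w P" using V PQ unfolding w_def by (meson minL gmin_V gmax_V trans)
  have wQ: "le w Q" using V PQ unfolding w_def by (meson minL minR gmin_V gmax_V trans)
  have wc: "le w c"
  proof (cases "le a b")
    case True
    then have "le w b" using wm by (simp add: gmax_def)
    then show ?thesis using mpc[OF wV V(2,3)] wQ by (simp add: Q_def)
  next
    case False
    then have "le w a" using wm by (simp add: gmax_def)
    then show ?thesis using mpc[OF wV V(1,3)] wP by (simp add: P_def)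
  qed
  have "le P (gimp le tp Q (gimp le tp (gmax le a b) c))"
    using wc V PQ unfolding w_def by (intro impI gimp_V gmin_V gmax_V) auto
  then show ?thesis using PQ V by (intro topI gimp_V gmax_V) (auto simp: P_def Q_def)
qed

lemma sound: assumes rho: "\<forall>n. \<rho> n \<in> V" shows "LC m \<phi> \<Longrightarrow> le tp (pe \<rho> \<phi>)"
proof (induction rule: LC.induct)
  have P: "\<And>\<phi>. pe \<rho> \<phi> \<in> V" using peV rho by blast
  {
  case (ax1 A B)
  show ?case using v_ax1[OF P P] by simp
next
  case (ax2 A B C)
  show ?case using v_ax2[OF P P P] by simp
next
  case (ax3 A B)
  show ?case using topI[OF gmin_V[OF P P] P minL[OF P P]] by simp
next
  case (ax4 A B)
  show ?case using topI[OF gmin_V[OF P P] P minR[OF P P]] by simp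
next
  case (ax5 A B)
  have "le (gmin le (pe \<rho> A) (pe \<rho> B)) (gmin le (pe \<rho> A) (pe \<rho> B))" using refl[OF gmin_V[OF P P]] .
  then have "le (pe \<rho> A) (gimp le tp (pe \<rho> B) (gmin le (pe \<rho> A) (pe \<rho> B)))" 
    using impI[OF P P gmin_V[OF P P]] by blast
  then show ?case using topI[OF P gimp_V[OF P gmin_V[OF P P]]] by simp
next
  case (ax6 A B)
  show ?case using topI[OF P gmax_V[OF P P]] max_ge[OF P P] by simp
next
  case (ax7 B A)
  show ?case using topI[OF P gmax_V[OF P P]] max_ge[OF P P] by simp
next
  case (ax8 A C B)
  show ?case using v_ax8[OF P P P] by simp
next
  case (ax9 A)
  show ?case using topI[OF btV P bt_le[OF P]] by simp
next
  case (lin A B)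
  have "le (pe \<rho> A) (pe \<rho> B) \<or> le (pe \<rho> B) (pe \<rho> A)" using total[OF P P] .
  then show ?case using max_top[OF gimp_V[OF P P] gimp_V[OF P P]] imp_top[OF P P] imp_top[OF P P] by simp
next
  case (bm As)
  define as where "as = map (pe \<rho>) As"
  have "length as = Suc m" "set as \<subseteq> V" using bm P by (auto simp: as_def)
  then obtain i where i: "i < m" "le (as ! i) (as ! Suc i)" using bmp by blast
  have "le tp (pe \<rho> (map (\<lambda>i. PImp (As ! i) (As ! Suc i)) [0..<m] ! i))"
    using i bm imp_top[OF P P] by (simp add: as_def del: upt_Suc)
  then show ?case using pbigOr_top[OF rho] i by simp
next
  case (mp A B)
  then have "le tp (gimp le tp (pe \<rho> A) (pe \<rho> B))" by simp
  then have "le (pe \<rho> A) (pe \<rho> B)" using imp_top[OF P P] by blast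
  then show ?case using trans[OF tpV P P] mp by blast
  }
qed

end

definition Dom :: "('f, 'p) tm set" where
  "Dom = {t. etfree_tm t \<and> closed_tm 0 t}"

abbreviation TOP :: "('f, 'p) fm" where "TOP \<equiv> Imp Bot Bot"

primrec ev_tm :: "(('f, 'p) fm \<Rightarrow> ('f, 'p) fm \<Rightarrow> bool) \<Rightarrow> ('f, 'p) tm list \<Rightarrow> ('f, 'p) tm \<Rightarrow> ('f, 'p) tm"
  and ev_fm :: "(('f, 'p) fm \<Rightarrow> ('f, 'p) fm \<Rightarrow> bool) \<Rightarrow> ('f, 'p) tm list \<Rightarrow> ('f, 'p) fm \<Rightarrow> ('f, 'p) fm" where
  "ev_tm le env (FVar x) = FVar x"
| "ev_tm le env (BVar i) = (if i < length env then env ! i else FVar 0)"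
| "ev_tm le env (Fn f ts) = Fn f (map (ev_tm le env) ts)"
| "ev_tm le env (Eps A) = (SOME d. d \<in> Dom \<and> (\<forall>d'\<in>Dom. le (ev_fm le (d' # env) A) (ev_fm le (d # env) A)))"
| "ev_tm le env (Tau A) = (SOME d. d \<in> Dom \<and> (\<forall>d'\<in>Dom. le (ev_fm le (d # env) A) (ev_fm le (d' # env) A)))"
| "ev_fm le env Bot = Bot"
| "ev_fm le env (Atom p ts) = Atom p (map (ev_tm le env) ts)"
| "ev_fm le env (And A B) = gmin le (ev_fm le env A) (ev_fm le env B)"
| "ev_fm le env (Or A B) = gmax le (ev_fm le env A) (ev_fm le env B)"
| "ev_fm le env (Imp A B) = gimp le TOP (ev_fm le env A) (ev_fm le env B)"

lemma Dom_ne: "FVar 0 \<in> Dom" by (simp add: Dom_def)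

lemma ev_append:
  fixes t :: "('f,'p) tm" and F :: "('f,'p) fm"
  shows "\<forall>k env. closed_tm k t \<longrightarrow> k \<le> length env \<longrightarrow> ev_tm le (env @ env') t = ev_tm le env t"
  and "\<forall>k env. closed_fm k F \<longrightarrow> k \<le> length env \<longrightarrow> ev_fm le (env @ env') F = ev_fm le env F"
proof (induct t and F)
  case (Eps A)
  show ?case
  proof (intro allI impI)
    fix k and env :: "('f,'p) tm list"
    assume "closed_tm k (Eps A)" "k \<le> length env"
    then have "\<And>d. ev_fm le ((d # env) @ env') A = ev_fm le (d # env) A"
      using Eps[rule_format, of "Suc k" "d # env" for d] by simp
    then show "ev_tm le (env @ env') (Eps A) = ev_tm le env (Eps A)" by simp
  qed
next
  case (Tau A)
  show ?case
  proof (intro allI impI)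
    fix k and env :: "('f,'p) tm list"
    assume "closed_tm k (Tau A)" "k \<le> length env"
    then have "\<And>d. ev_fm le ((d # env) @ env') A = ev_fm le (d # env) A"
      using Tau[rule_format, of "Suc k" "d # env" for d] by simp
    then show "ev_tm le (env @ env') (Tau A) = ev_tm le env (Tau A)" by simp
  qed
qed (auto simp: list_all_iff nth_append)

lemma ev_closed0: "closed_tm 0 u \<Longrightarrow> ev_tm le env u = ev_tm le [] u"
  using ev_append(1)[rule_format, of 0 u "[]" le env] by simp

lemma ev_inst:
  fixes t :: "('f,'p) tm" and F :: "('f,'p) fm"
  assumes u: "closed_tm 0 u"
  shows "\<forall>k env. closed_tm (Suc k) t \<longrightarrow> length env = k \<longrightarrow> ev_tm le env (inst_tm k u t) = ev_tm le (env @ [ev_tm le [] u]) t"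
  and "\<forall>k env. closed_fm (Suc k) F \<longrightarrow> length env = k \<longrightarrow> ev_fm le env (inst_fm k u F) = ev_fm le (env @ [ev_tm le [] u]) F"
proof (induct t and F)
  case (BVar i)
  then show ?case using ev_closed0[OF u] by (auto simp: nth_append)
next
  case (Eps A)
  show ?case
  proof (intro allI impI)
    fix k and env :: "('f,'p) tm list"
    assume "closed_tm (Suc k) (Eps A)" "length env = k"
    then have "\<And>d. ev_fm le (d # env) (inst_fm (Suc k) u A) = ev_fm le ((d # env) @ [ev_tm le [] u]) A"
      using Eps[rule_format, of "Suc k" "d # env" for d] by simp
    then show "ev_tm le env (inst_tm k u (Eps A)) = ev_tm le (env @ [ev_tm le [] u]) (Eps A)" by simp
  qed
next
  case (Tau A)
  show ?case
  proof (intro allI impI)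
    fix k and env :: "('f,'p) tm list"
    assume "closed_tm (Suc k) (Tau A)" "length env = k"
    then have "\<And>d. ev_fm le (d # env) (inst_fm (Suc k) u A) = ev_fm le ((d # env) @ [ev_tm le [] u]) A"
      using Tau[rule_format, of "Suc k" "d # env" for d] by simp
    then show "ev_tm le env (inst_tm k u (Tau A)) = ev_tm le (env @ [ev_tm le [] u]) (Tau A)" by simp
  qed
qed (auto simp: list_all_iff)

lemma ev_inst0: "closed_fm 1 A \<Longrightarrow> closed_tm 0 u \<Longrightarrow> ev_fm le [] (inst_fm 0 u A) = ev_fm le [ev_tm le [] u] A"
  using ev_inst(2)[rule_format, of u 0 A "[]"] by simp

lemma ev_psub: "ev_fm le env (psub \<sigma> \<phi>) = peval le Bot TOP (\<lambda>n. ev_fm le env (\<sigma> n)) \<phi>"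
  by (induction \<phi>) auto

lemma ev_etfree: 
  fixes t :: "('f,'p) tm" and F :: "('f,'p) fm"
  shows "etfree_tm t \<longrightarrow> closed_tm 0 t \<longrightarrow> ev_tm le env t = t"
  and "etfree_fm F \<longrightarrow> closed_fm 0 F \<longrightarrow> True"
  by (induct t and F) (auto simp: list_all_iff map_idI)

lemma closed0_mono: "closed_tm 0 t \<Longrightarrow> closed_tm k t"
  using closed_mono(1) by blast

lemma subst_Dom_aux:
  fixes s :: "('f,'p) tm" and F :: "('f,'p) fm"
  shows "\<forall>k. etfree_tm s \<longrightarrow> closed_tm k s \<longrightarrow> (\<forall>x. \<sigma> x \<in> Dom) \<longrightarrow> etfree_tm (subst_tm \<sigma> s) \<and> closed_tm k (subst_tm \<sigma> s)"
   and "etfree_fm F \<longrightarrow> True"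
  by (induct s and F) (auto simp: list_all_iff Dom_def closed0_mono)

lemma subst_Dom: "etfree_tm s \<Longrightarrow> closed_tm 0 s \<Longrightarrow> (\<forall>x. \<sigma> x \<in> Dom) \<Longrightarrow> subst_tm \<sigma> s \<in> Dom"
  using subst_Dom_aux(1)[where \<sigma>=\<sigma> and s=s] by (auto simp: Dom_def)

lemma ev_subst_tm:
  fixes s :: "('f,'p) tm" and F :: "('f,'p) fm"
  shows "etfree_tm s \<longrightarrow> closed_tm 0 s \<longrightarrow> ev_tm le [] (subst_tm \<sigma> s) = subst_tm (\<lambda>x. ev_tm le [] (\<sigma> x)) s"
  and "etfree_fm F \<longrightarrow> True"
  by (induct s and F) (auto simp: list_all_iff)

lemma ev_subst_atom:
  assumes "\<forall>x. ev_tm le [] (\<sigma> x) \<in> Dom" "etfree_tm s" "closed_tm 0 s"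
  shows "ev_tm le [] (subst_tm \<sigma> s) = ev_tm le [] (subst_tm (\<lambda>x. ev_tm le [] (\<sigma> x)) s)"
proof -
  have "subst_tm (\<lambda>x. ev_tm le [] (\<sigma> x)) s \<in> Dom" by (rule subst_Dom[OF assms(2,3)]) (use assms(1) in blast)
  then have "ev_tm le [] (subst_tm (\<lambda>x. ev_tm le [] (\<sigma> x)) s) = subst_tm (\<lambda>x. ev_tm le [] (\<sigma> x)) s"
    using ev_etfree(1) by (auto simp: Dom_def)
  then show ?thesis using ev_subst_tm(1) assms by metis
qed

lemma ev_subst_fm_aux:
  fixes t :: "('f,'p) tm" and A :: "('f,'p) fm"
  assumes "\<forall>x. ev_tm le [] (\<sigma> x) \<in> Dom"
  shows "True"
  and "etfree_fm A \<longrightarrow> closed_fm 0 A \<longrightarrow> ev_fm le [] (subst_fm \<sigma> A) = ev_fm le [] (subst_fm (\<lambda>x. ev_tm le [] (\<sigma> x)) A)"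
proof (induct t and A)
  case (Atom p ts)
  then show ?case using ev_subst_atom[OF assms] by (auto simp: list_all_iff)
qed auto

lemma ev_subst_fm:
  assumes "\<forall>x. ev_tm le [] (\<sigma> x) \<in> Dom" "etfree_fm A" "closed_fm 0 A"
  shows "ev_fm le [] (subst_fm \<sigma> A) = ev_fm le [] (subst_fm (\<lambda>x. ev_tm le [] (\<sigma> x)) A)"
  using ev_subst_fm_aux(2)[OF assms(1)] assms(2,3) by blast

locale model = gchain "{F. closed_fm 0 F}" le Bot TOP m
  for le :: "('f, 'p) fm \<Rightarrow> ('f, 'p) fm \<Rightarrow> bool" and m
begin

lemma ex_max:
  assumes f: "\<forall>d\<in>Dom. cl (f d)"
  shows "\<exists>d\<in>Dom. \<forall>d'\<in>Dom. le (f d') (f d)"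
proof (rule ccontr)
  assume "\<not> ?thesis"
  then have "\<forall>d\<in>Dom. \<exists>d'\<in>Dom. \<not> le (f d') (f d)" by blast
  then obtain h where h: "\<forall>d\<in>Dom. h d \<in> Dom \<and> \<not> le (f (h d)) (f d)" by metis
  define g where "g n = (h ^^ n) (FVar 0)" for n
  have gD: "g n \<in> Dom" for n by (induction n) (auto simp: g_def Dom_ne h)
  have gS: "g (Suc n) = h (g n)" for n by (simp add: g_def)
  define as where "as = map (\<lambda>i. f (g (m - i))) [0..<Suc m]"
  have "length as = Suc m" "set as \<subseteq> {F. cl F}" using gD f by (auto simp: as_def)
  then obtain i where i: "i < m" "le (as ! i) (as ! Suc i)" using bmp by blast
  have "m - i = Suc (m - Suc i)" using i(1) by simp
  then have "as ! i = f (h (g (m - Suc i)))" "as ! Suc i = f (g (m - Suc i))" using i(1)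
    by (simp_all add: as_def gS del: upt_Suc)
  then show False using i(2) h gD by metis
qed

lemma ex_min:
  assumes f: "\<forall>d\<in>Dom. cl (f d)"
  shows "\<exists>d\<in>Dom. \<forall>d'\<in>Dom. le (f d) (f d')"
proof (rule ccontr)
  assume "\<not> ?thesis"
  then have "\<forall>d\<in>Dom. \<exists>d'\<in>Dom. \<not> le (f d) (f d')" by blast
  then obtain h where h: "\<forall>d\<in>Dom. h d \<in> Dom \<and> \<not> le (f d) (f (h d))" by metis
  define g where "g n = (h ^^ n) (FVar 0)" for n
  have gD: "g n \<in> Dom" for n by (induction n) (auto simp: g_def Dom_ne h)
  have gS: "g (Suc n) = h (g n)" for n by (simp add: g_def)
  define as where "as = map (\<lambda>i. f (g i)) [0..<Suc m]"
  have "length as = Suc m" "set as \<subseteq> {F. cl F}" using gD f by (auto simp: as_def)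
  then obtain i where i: "i < m" "le (as ! i) (as ! Suc i)" using bmp by blast
  then have "as ! i = f (g i)" "as ! Suc i = f (h (g i))" using i(1)
    by (simp_all add: as_def gS del: upt_Suc)
  then show False using i(2) h gD by metis
qed

lemma ev_in:
  fixes t :: "('f,'p) tm" and F :: "('f,'p) fm"
  shows "\<forall>env. set env \<subseteq> Dom \<longrightarrow> ev_tm le env t \<in> Dom"
  and "\<forall>env. set env \<subseteq> Dom \<longrightarrow> cl (ev_fm le env F)"
proof (induct t and F)
  case (FVar x) then show ?case by (simp add: Dom_def)
next
  case (BVar i) then show ?case by (auto simp: Dom_ne)
next
  case (Fn f ts) then show ?case by (auto simp: Dom_def list_all_iff)
next
  case (Eps A)
  have "ev_tm le env (Eps A) \<in> Dom" if e: "set env \<subseteq> Dom" for env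
  proof -
    have "\<forall>d\<in>Dom. cl (ev_fm le (d # env) A)" using Eps e by auto
    from ex_max[OF this] have ex: "\<exists>d. d \<in> Dom \<and> (\<forall>d'\<in>Dom. le (ev_fm le (d' # env) A) (ev_fm le (d # env) A))" by blast
    show ?thesis using someI_ex[OF ex] by simp
  qed
  then show ?case by blast
next
  case (Tau A)
  have "ev_tm le env (Tau A) \<in> Dom" if e: "set env \<subseteq> Dom" for env
  proof -
    have "\<forall>d\<in>Dom. cl (ev_fm le (d # env) A)" using Tau e by auto
    from ex_min[OF this] have ex: "\<exists>d. d \<in> Dom \<and> (\<forall>d'\<in>Dom. le (ev_fm le (d # env) A) (ev_fm le (d' # env) A))" by blast
    show ?thesis using someI_ex[OF ex] by simp
  qed
  then show ?case by blast
next
  case (Atom p ts) then show ?case by (auto simp: Dom_def list_all_iff)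
qed (auto simp: gmin_def gmax_def gimp_def)

lemma evV: "set env \<subseteq> Dom \<Longrightarrow> cl (ev_fm le env F)"
  using ev_in(2) by blast
lemma evD: "set env \<subseteq> Dom \<Longrightarrow> ev_tm le env t \<in> Dom"
  using ev_in(1) by blast

lemma eps_max: assumes "set env \<subseteq> Dom" "d \<in> Dom"
  shows "le (ev_fm le (d # env) A) (ev_fm le (ev_tm le env (Eps A) # env) A)"
proof -
  have "\<forall>d\<in>Dom. cl (ev_fm le (d # env) A)" using evV assms(1) by auto
  from ex_max[OF this] have ex: "\<exists>d. d \<in> Dom \<and> (\<forall>d'\<in>Dom. le (ev_fm le (d' # env) A) (ev_fm le (d # env) A))" by blast
  show ?thesis using someI_ex[OF ex] assms(2) by simp
qed

lemma tau_min: assumes "set env \<subseteq> Dom" "d \<in> Dom"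
  shows "le (ev_fm le (ev_tm le env (Tau A) # env) A) (ev_fm le (d # env) A)"
proof -
  have "\<forall>d\<in>Dom. cl (ev_fm le (d # env) A)" using evV assms(1) by auto
  from ex_min[OF this] have ex: "\<exists>d. d \<in> Dom \<and> (\<forall>d'\<in>Dom. le (ev_fm le (d # env) A) (ev_fm le (d' # env) A))" by blast
  show ?thesis using someI_ex[OF ex] assms(2) by simp
qed

lemma sound_et: "deriv True m F \<Longrightarrow> le TOP (ev_fm le [] F)"
proof (induction rule: deriv.induct)
  case (crit_eps A t)
  have tD: "ev_tm le [] t \<in> Dom" by (rule evD) simp
  have eD: "ev_tm le [] (Eps A) \<in> Dom" by (rule evD) simp
  have c: "closed_tm 0 (Eps A)" using crit_eps by simp
  have "le (ev_fm le [ev_tm le [] t] A) (ev_fm le [ev_tm le [] (Eps A)] A)"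
    using eps_max[of "[]" "ev_tm le [] t" A] tD by simp
  moreover have "cl (ev_fm le [ev_tm le [] t] A)" "cl (ev_fm le [ev_tm le [] (Eps A)] A)" using tD eD by (intro evV; auto)+
  ultimately have "le TOP (gimp le TOP (ev_fm le [ev_tm le [] t] A) (ev_fm le [ev_tm le [] (Eps A)] A))" using topI by simp
  then show ?case using crit_eps c by (simp add: ev_inst0)
next
  case (crit_tau A t)
  have tD: "ev_tm le [] t \<in> Dom" by (rule evD) simp
  have eD: "ev_tm le [] (Tau A) \<in> Dom" by (rule evD) simp
  have c: "closed_tm 0 (Tau A)" using crit_tau by simp
  have "le (ev_fm le [ev_tm le [] (Tau A)] A) (ev_fm le [ev_tm le [] t] A)"
    using tau_min[of "[]" "ev_tm le [] t" A] tD by simp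
  moreover have "cl (ev_fm le [ev_tm le [] (Tau A)] A)" "cl (ev_fm le [ev_tm le [] t] A)" using tD eD by (intro evV; auto)+
  ultimately have "le TOP (gimp le TOP (ev_fm le [ev_tm le [] (Tau A)] A) (ev_fm le [ev_tm le [] t] A))" using topI by simp
  then show ?case using crit_tau c by (simp add: ev_inst0)
next
  case (inst \<phi> \<sigma>)
  have "\<forall>n. (\<lambda>n. ev_fm le [] (\<sigma> n)) n \<in> {F. cl F}" using evV by simp
  from sound[OF this inst(1)] show ?case by (simp add: ev_psub)
next
  case (mp A B)
  have V: "cl (ev_fm le [] A)" "cl (ev_fm le [] B)" using evV by simp_all
  have "le (ev_fm le [] A) (ev_fm le [] B)" using mp(3) imp_top[of "ev_fm le [] A" "ev_fm le [] B"] V by simp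
  then show ?case using trans[of TOP "ev_fm le [] A" "ev_fm le [] B"] V mp(4) by simp
qed

end

lemma cl_bigOr: "\<forall>F\<in>set l. cl F \<Longrightarrow> cl (bigOr l)"
  by (induction l rule: bigOr.induct) auto

lemma TOP_d: "dH m H TOP"
  by (rule dH.thmH, rule d_id) simp

lemma dH_imp_weak: "dH m H Y \<Longrightarrow> cl X \<Longrightarrow> clset H \<Longrightarrow> dH m H (Imp X Y)"
  using dH_closed by (meson dH.mpH dH_ax(2))

lemma bigOr_left: "l1 \<noteq> [] \<Longrightarrow> \<forall>F\<in>set (l1 @ l2). cl F \<Longrightarrow> clset H \<Longrightarrow> dH m H (Imp (bigOr l1) (bigOr (l1 @ l2)))"
proof (induction l1 rule: bigOr.induct)
  case 1 then show ?case by simp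
next
  case (2 A)
  show ?case
  proof (cases l2)
    case Nil then show ?thesis using 2 by (simp add: dH_ax(1))
  next
    case (Cons B Bs)
    then show ?thesis using 2 cl_bigOr[of l2] by (simp add: dH_ax(7))
  qed
next
  case (3 A B Bs)
  have c: "cl A" "cl (bigOr (B # Bs))" "cl (bigOr (B # Bs @ l2))" using 3(3) cl_bigOr[of "B # Bs"] cl_bigOr[of "B # Bs @ l2"] by auto
  have ih: "dH m H (Imp (bigOr (B # Bs)) (bigOr (B # Bs @ l2)))" using 3 by simp
  have "dH m H (Imp A (Or A (bigOr (B # Bs @ l2))))" using c by (simp add: dH_ax(7))
  moreover have "dH m H (Imp (bigOr (B # Bs @ l2)) (Or A (bigOr (B # Bs @ l2))))" using c by (simp add: dH_ax(8))
  then have "dH m H (Imp (bigOr (B # Bs)) (Or A (bigOr (B # Bs @ l2))))" using dH_trans[OF ih] 3(4) by blast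
  ultimately show ?case using dH_or 3(4) by simp
qed

lemma bigOr_Cons: "r \<noteq> [] \<Longrightarrow> bigOr (A # r) = Or A (bigOr r)"
  by (cases r) auto

lemma bigOr_right: "l2 \<noteq> [] \<Longrightarrow> \<forall>F\<in>set (l1 @ l2). cl F \<Longrightarrow> clset H \<Longrightarrow> dH m H (Imp (bigOr l2) (bigOr (l1 @ l2)))"
proof (induction l1)
  case Nil
  then show ?case using cl_bigOr[of l2] by (simp add: dH_ax(1))
next
  case (Cons A r)
  have c: "cl A" "cl (bigOr (r @ l2))" using Cons(3) cl_bigOr[of "r @ l2"] by auto
  have "dH m H (Imp (bigOr (r @ l2)) (Or A (bigOr (r @ l2))))" using c by (simp add: dH_ax(8))
  moreover have "dH m H (Imp (bigOr l2) (bigOr (r @ l2)))" using Cons by simp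
  ultimately have "dH m H (Imp (bigOr l2) (Or A (bigOr (r @ l2))))" using dH_trans[of m H "bigOr l2" "bigOr (r @ l2)"] Cons(4) by blast
  then show ?case using Cons(2) by (simp add: bigOr_Cons)
qed

lemma bigOr_merge: "l1 \<noteq> [] \<Longrightarrow> l2 \<noteq> [] \<Longrightarrow> \<forall>F\<in>set (l1 @ l2). cl F \<Longrightarrow> clset H \<Longrightarrow>
   dH m H (Imp (Or (bigOr l1) (bigOr l2)) (bigOr (l1 @ l2)))"
  by (rule dH_or[OF bigOr_left bigOr_right]) auto

lemma lindenbaum:
  fixes Dj :: "('f, 'p) fm set"
  assumes noder: "\<forall>\<delta>\<in>Dj. \<not> deriv False m \<delta>"
    and merge: "\<forall>\<delta>1\<in>Dj. \<forall>\<delta>2\<in>Dj. \<exists>\<delta>3\<in>Dj. dH m {} (Imp (Or \<delta>1 \<delta>2) \<delta>3)"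
    and clD: "\<forall>\<delta>\<in>Dj. cl \<delta>"
  shows "\<exists>T. clset T \<and> (\<forall>\<delta>\<in>Dj. \<not> dH m T \<delta>) \<and> (\<forall>F. cl F \<longrightarrow> dH m T F \<longrightarrow> F \<in> T)
     \<and> (\<forall>B C. Or B C \<in> T \<longrightarrow> B \<in> T \<or> C \<in> T)"
proof -
  define AA where "AA = {S. clset S \<and> (\<forall>\<delta>\<in>Dj. \<not> dH m S \<delta>)}"
  have e: "{} \<in> AA" using noder dH_empty by (auto simp: AA_def)
  have "\<exists>M\<in>AA. \<forall>X\<in>AA. M \<subseteq> X \<longrightarrow> X = M"
  proof (rule subset_Zorn_nonempty)
    show "AA \<noteq> {}" using e by blast
  next
    fix C assume C: "C \<noteq> {}" "subset.chain AA C"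
    have CA: "C \<subseteq> AA" using C(2) by (simp add: subset_chain_def)
    have "clset (\<Union>C)" using CA by (auto simp: AA_def)
    moreover have "\<not> dH m (\<Union>C) \<delta>" if d: "\<delta> \<in> Dj" for \<delta>
    proof
      assume "dH m (\<Union>C) \<delta>"
      from dH_compact[OF this] obtain H0 where H0: "finite H0" "H0 \<subseteq> \<Union>C" "dH m H0 \<delta>" by blast
      obtain B where B: "B \<in> C" "H0 \<subseteq> B" using finite_subset_Union_chain[OF H0(1,2) C(1,2)] by blast
      have "dH m B \<delta>" using dH_mono[OF H0(3) B(2)] .
      then show False using B(1) CA d by (auto simp: AA_def)
    qed
    ultimately show "\<Union>C \<in> AA" by (simp add: AA_def)
  qed
  then obtain T where T: "T \<in> AA" and maxT: "\<And>X. X \<in> AA \<Longrightarrow> T \<subseteq> X \<Longrightarrow> X = T" by blast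
  have clT: "clset T" and noT: "\<forall>\<delta>\<in>Dj. \<not> dH m T \<delta>" using T by (auto simp: AA_def)
  have ext: "\<exists>\<delta>\<in>Dj. dH m (insert F T) \<delta>" if "cl F" "F \<notin> T" for F
  proof (rule ccontr)
    assume "\<not> ?thesis"
    then have "insert F T \<in> AA" using clT that by (auto simp: AA_def)
    then have "insert F T = T" using maxT by blast
    then show False using that by blast
  qed
  have dcl: "F \<in> T" if Fh: "cl F" "dH m T F" for F
  proof (rule ccontr)
    assume "F \<notin> T"
    then obtain \<delta> where "\<delta> \<in> Dj" "dH m (insert F T) \<delta>" using ext Fh by blast
    then have "dH m T (Imp F \<delta>)" "\<delta> \<in> Dj" using dH_deduct[of m F T \<delta>] Fh clT by auto
    then show False using noT dH.mpH[OF _ Fh(2)] by blast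
  qed
  have prime: "B \<in> T \<or> C \<in> T" if OrT: "Or B C \<in> T" for B C
  proof (rule ccontr)
    assume nt: "\<not> (B \<in> T \<or> C \<in> T)"
    have cBC: "cl B" "cl C" using clT OrT by auto
    obtain \<delta>1 where d1: "\<delta>1 \<in> Dj" "dH m (insert B T) \<delta>1" using ext cBC nt by blast
    obtain \<delta>2 where d2: "\<delta>2 \<in> Dj" "dH m (insert C T) \<delta>2" using ext cBC nt by blast
    have c12: "cl \<delta>1" "cl \<delta>2" using clD d1 d2 by auto
    have i1: "dH m T (Imp B \<delta>1)" "dH m T (Imp C \<delta>2)"
      using dH_deduct[OF d1(2) cBC(1) clT] dH_deduct[OF d2(2) cBC(2) clT] by auto
    have j: "dH m T (Imp \<delta>1 (Or \<delta>1 \<delta>2))" "dH m T (Imp \<delta>2 (Or \<delta>1 \<delta>2))"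
      using dH_ax(7)[OF c12] dH_ax(8)[OF c12] by auto
    have k: "dH m T (Imp B (Or \<delta>1 \<delta>2))" "dH m T (Imp C (Or \<delta>1 \<delta>2))"
      using dH_trans[OF i1(1) j(1) clT] dH_trans[OF i1(2) j(2) clT] by auto
    have "dH m T (Imp (Or B C) (Or \<delta>1 \<delta>2))" using dH_or[OF k clT] .
    then have o: "dH m T (Or \<delta>1 \<delta>2)" using dH.mpH[OF _ dH.hypH[OF OrT]] by blast
    obtain \<delta>3 where d3: "\<delta>3 \<in> Dj" "dH m {} (Imp (Or \<delta>1 \<delta>2) \<delta>3)" using merge d1 d2 by blast
    have "dH m T (Imp (Or \<delta>1 \<delta>2) \<delta>3)" using dH_mono[OF d3(2)] by blast
    then have "dH m T \<delta>3" using dH.mpH[OF _ o] by blast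
    then show False using noT d3 by blast
  qed
  show ?thesis using clT noT dcl prime by blast
qed

locale lmodel =
  fixes T :: "('f, 'p) fm set" and m :: nat
  assumes clT: "clset T"
    and dcl: "\<And>F. cl F \<Longrightarrow> dH m T F \<Longrightarrow> F \<in> T"
    and prime: "\<And>B C. Or B C \<in> T \<Longrightarrow> B \<in> T \<or> C \<in> T"
    and noBot: "Bot \<notin> T"
begin

abbreviation Le :: "('f, 'p) fm \<Rightarrow> ('f, 'p) fm \<Rightarrow> bool" where "Le X Y \<equiv> Imp X Y \<in> T"

lemma dLe: "cl X \<Longrightarrow> cl Y \<Longrightarrow> dH m T (Imp X Y) \<Longrightarrow> Le X Y"
  using dcl by simp

lemma LeD: "Le X Y \<Longrightarrow> dH m T (Imp X Y)"
  by (rule dH.hypH)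

lemma prime_bigOr: "bigOr l \<in> T \<Longrightarrow> \<exists>x\<in>set l. x \<in> T"
proof (induction l rule: bigOr.induct)
  case 1 then show ?case using noBot by simp
next
  case (2 A) then show ?case by simp
next
  case (3 A B Bs) then show ?case using prime by auto
qed

lemma is_gchain: "gchain {F. cl F} Le Bot TOP m"
proof
  fix x :: "('f,'p) fm" assume "x \<in> {F. cl F}"
  then show "Le x x" by (intro dLe dH_ax(1)) auto
next
  fix x y z :: "('f,'p) fm" assume V: "x \<in> {F. cl F}" "y \<in> {F. cl F}" "z \<in> {F. cl F}" and h: "Le x y" "Le y z"
  show "Le x z" using dH_trans[OF LeD[OF h(1)] LeD[OF h(2)] clT] V dcl by auto
next
  fix x y :: "('f,'p) fm" assume V: "x \<in> {F. cl F}" "y \<in> {F. cl F}"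
  have "Or (Imp x y) (Imp y x) \<in> T" using V by (intro dcl dH_ax(11)) auto
  then show "Le x y \<or> Le y x" using prime by blast
next
  show "Bot \<in> {F. cl F}" "TOP \<in> {F. cl F}" by auto
next
  fix x :: "('f,'p) fm" assume V: "x \<in> {F. cl F}"
  show "Le Bot x" using V by (intro dLe dH_ax(10)) auto
  show "Le x TOP" using V clT by (intro dLe dH_imp_weak[OF TOP_d]) auto
next
  fix as :: "('f,'p) fm list" assume a: "length as = Suc m" "set as \<subseteq> {F. cl F}"
  have "deriv False m (bigOr (map (\<lambda>i. Imp (as ! i) (as ! Suc i)) [0..<m]))"
    using d_bm a by blast
  then have "bigOr (map (\<lambda>i. Imp (as ! i) (as ! Suc i)) [0..<m]) \<in> T"
    using dcl dH.thmH deriv_closed by blast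
  then show "\<exists>i<m. Le (as ! i) (as ! Suc i)" using prime_bigOr by fastforce
qed

end

sublocale lmodel \<subseteq> model "\<lambda>X Y. Imp X Y \<in> T" m
  unfolding model_def using is_gchain .

context lmodel begin

lemma and1: "cl X \<Longrightarrow> cl Y \<Longrightarrow> Le (And X Y) X" by (intro dLe dH_ax(4)) auto
lemma and2: "cl X \<Longrightarrow> cl Y \<Longrightarrow> Le (And X Y) Y" by (intro dLe dH_ax(5)) auto
lemma andI: "Le Z X \<Longrightarrow> Le Z Y \<Longrightarrow> Le Z (And X Y)"
  using dH_and[OF LeD LeD clT] dcl dH_closed clT by (metis closed_fm.simps(5) dH.hypH)

lemma or1: "cl X \<Longrightarrow> cl Y \<Longrightarrow> Le X (Or X Y)" by (intro dLe dH_ax(7)) auto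
lemma or2: "cl X \<Longrightarrow> cl Y \<Longrightarrow> Le Y (Or X Y)" by (intro dLe dH_ax(8)) auto
lemma orE: "Le X Z \<Longrightarrow> Le Y Z \<Longrightarrow> Le (Or X Y) Z"
proof -
  assume h: "Le X Z" "Le Y Z"
  have c: "cl X" "cl Y" "cl Z" using h clT by auto
  show ?thesis using dH_or[OF LeD[OF h(1)] LeD[OF h(2)] clT] c by (intro dLe) auto
qed
lemma impTop: "Le X Y \<Longrightarrow> Le TOP (Imp X Y)"
proof -
  assume h: "Le X Y"
  then have c: "cl (Imp X Y)" using clT by auto
  show ?thesis using dH_imp_weak[OF dH.hypH[OF h]] c clT by (intro dLe) auto
qed
lemma impY: "cl X \<Longrightarrow> cl Y \<Longrightarrow> Le Y (Imp X Y)" by (intro dLe dH_ax(2)) auto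
lemma impNot: assumes c: "cl X" "cl Y" and n: "\<not> Le X Y" shows "Le (Imp X Y) Y"
proof -
  have "Or (Imp (Imp X Y) X) (Imp X (Imp X Y)) \<in> T" using c by (intro dcl dH_ax(11)) auto
  then have "Imp (Imp X Y) X \<in> T \<or> Imp X (Imp X Y) \<in> T" using prime by blast
  then show ?thesis
  proof
    assume h: "Imp X (Imp X Y) \<in> T"
    have x: "dH m (insert X T) X" by (rule dH.hypH) simp
    have "dH m (insert X T) (Imp X (Imp X Y))" using h by (intro dH.hypH) simp
    then have "dH m (insert X T) (Imp X Y)" using x dH.mpH by blast
    then have "dH m (insert X T) Y" using x dH.mpH by blast
    then have "dH m T (Imp X Y)" using dH_deduct c clT by blast
    then have "Le X Y" using c by (intro dLe) auto
    then show ?thesis using n by blast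
  next
    assume h: "Imp (Imp X Y) X \<in> T"
    have x: "dH m (insert (Imp X Y) T) (Imp X Y)" by (rule dH.hypH) simp
    have "dH m (insert (Imp X Y) T) (Imp (Imp X Y) X)" using h by (intro dH.hypH) simp
    then have "dH m (insert (Imp X Y) T) X" using x dH.mpH by blast
    then have "dH m (insert (Imp X Y) T) Y" using x dH.mpH by blast
    then have "dH m T (Imp (Imp X Y) Y)" using c clT by (intro dH_deduct) auto
    then show ?thesis using c by (intro dLe) auto
  qed
qed
lemma topT: "Le TOP F \<Longrightarrow> F \<in> T"
proof -
  assume h: "Le TOP F"
  then have "cl F" using clT by auto
  then show ?thesis using dH.mpH[OF dH.hypH[OF h] TOP_d] by (intro dcl)
qed

abbreviation EV :: "('f, 'p) fm \<Rightarrow> ('f, 'p) fm" where "EV F \<equiv> ev_fm (\<lambda>X Y. Imp X Y \<in> T) [] F"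

lemma EVc: "cl (EV F)" using evV by simp

lemma Ltrans: "Le x y \<Longrightarrow> Le y z \<Longrightarrow> Le x z"
proof -
  assume h: "Le x y" "Le y z"
  then have "cl x" "cl y" "cl z" using clT by auto
  then show ?thesis using trans[of x y z] h by simp
qed

lemma truth:
  fixes t :: "('f,'p) tm" and F :: "('f,'p) fm"
  shows "True" and "etfree_fm F \<longrightarrow> cl F \<longrightarrow> Le (EV F) F \<and> Le F (EV F)"
proof (induct t and F)
  case Bot
  then show ?case using refl[of Bot] by simp
next
  case (Atom p ts)
  have "map (ev_tm (\<lambda>X Y. Imp X Y \<in> T) []) ts = ts" if "etfree_fm (Atom p ts)" "cl (Atom p ts)"
    using that ev_etfree(1) by (auto simp: list_all_iff intro!: map_idI) blast
  then show ?case using refl[of "Atom p ts"] by auto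
next
  case (And X Y)
  show ?case
  proof (intro HOL.impI)
    assume h: "etfree_fm (And X Y)" "cl (And X Y)"
    then have c: "cl X" "cl Y" by auto
    have ih: "Le (EV X) X" "Le X (EV X)" "Le (EV Y) Y" "Le Y (EV Y)" using And h by auto
    have m: "Le (gmin (\<lambda>X Y. Imp X Y \<in> T) (EV X) (EV Y)) (EV X)" "Le (gmin (\<lambda>X Y. Imp X Y \<in> T) (EV X) (EV Y)) (EV Y)"
      using min_le[of "EV X" "EV Y"] EVc by auto
    have 1: "Le (EV (And X Y)) (And X Y)"
      using andI[OF Ltrans[OF m(1) ih(1)] Ltrans[OF m(2) ih(3)]] by simp
    have 2: "Le (And X Y) (EV (And X Y))"
      using min_ge[of "EV X" "EV Y" "And X Y"] EVc c Ltrans[OF and1[OF c] ih(2)] Ltrans[OF and2[OF c] ih(4)] by simp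
    show "Le (EV (And X Y)) (And X Y) \<and> Le (And X Y) (EV (And X Y))" using 1 2 by blast
  qed
next
  case (Or X Y)
  show ?case
  proof (intro HOL.impI)
    assume h: "etfree_fm (Or X Y)" "cl (Or X Y)"
    then have c: "cl X" "cl Y" by auto
    have ih: "Le (EV X) X" "Le X (EV X)" "Le (EV Y) Y" "Le Y (EV Y)" using Or h by auto
    have m: "Le (EV X) (gmax (\<lambda>X Y. Imp X Y \<in> T) (EV X) (EV Y))" "Le (EV Y) (gmax (\<lambda>X Y. Imp X Y \<in> T) (EV X) (EV Y))"
      using max_ge[of "EV X" "EV Y"] EVc by auto
    have 1: "Le (EV (Or X Y)) (Or X Y)"
      using max_le[of "EV X" "EV Y" "Or X Y"] EVc c Ltrans[OF ih(1) or1[OF c]] Ltrans[OF ih(3) or2[OF c]] by simp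
    have 2: "Le (Or X Y) (EV (Or X Y))"
      using orE[OF Ltrans[OF ih(2) m(1)] Ltrans[OF ih(4) m(2)]] by simp
    show "Le (EV (Or X Y)) (Or X Y) \<and> Le (Or X Y) (EV (Or X Y))" using 1 2 by blast
  qed
next
  case (Imp X Y)
  show ?case
  proof (intro HOL.impI)
    assume h: "etfree_fm (Imp X Y)" "cl (Imp X Y)"
    then have c: "cl X" "cl Y" by auto
    have ih: "Le (EV X) X" "Le X (EV X)" "Le (EV Y) Y" "Le Y (EV Y)" using Imp h by auto
    show "Le (EV (Imp X Y)) (Imp X Y) \<and> Le (Imp X Y) (EV (Imp X Y))"
    proof (cases "Le (EV X) (EV Y)")
      case True
      then have "Le X Y" using Ltrans[OF Ltrans[OF ih(2) True] ih(3)] by simp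
      then have "Le TOP (Imp X Y)" by (rule impTop)
      moreover have "Le (Imp X Y) TOP" using le_tp[of "Imp X Y"] c by simp
      ultimately show ?thesis using True by (simp add: gimp_def)
    next
      case False
      then have nXY: "\<not> Le X Y" using Ltrans[OF Ltrans[OF ih(1)] ih(4)] by blast
      have "Le (Imp X Y) (EV Y)" using Ltrans[OF impNot[OF c nXY] ih(4)] .
      moreover have "Le (EV Y) (Imp X Y)" using Ltrans[OF ih(3) impY[OF c]] .
      ultimately show ?thesis using False by (simp add: gimp_def)
    qed
  qed
qed auto

end

lemma map_of_zip_map: "map_of (zip xs (map f ts)) x = map_option f (map_of (zip xs ts) x)"
proof (induction xs arbitrary: ts)
  case Nil then show ?case by simp
next
  case (Cons a xs) then show ?case by (cases ts) auto
qed

lemma subst_list_map: "(\<And>x. f (FVar x) = FVar x) \<Longrightarrow> (\<lambda>x. f (subst_list xs ts x)) = subst_list xs (map f ts)"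
  by (rule ext) (auto simp: subst_list_def map_of_zip_map split: option.splits)

lemma subst_list_in: "(\<forall>t\<in>set ts. P t) \<Longrightarrow> (\<And>x. P (FVar x)) \<Longrightarrow> P (subst_list xs ts x)"
  by (auto simp: subst_list_def split: option.splits dest!: map_of_SomeD set_zip_rightD)

lemma subst_fm_good_aux:
  fixes t :: "('f,'p) tm" and A :: "('f,'p) fm"
  assumes "\<forall>x. \<sigma> x \<in> Dom"
  shows "True" and "etfree_fm A \<longrightarrow> cl A \<longrightarrow> etfree_fm (subst_fm \<sigma> A) \<and> cl (subst_fm \<sigma> A)"
proof (induct t and A)
  case (Atom p ts)
  then show ?case using subst_Dom[of _ \<sigma>] assms by (auto simp: list_all_iff Dom_def)
qed auto

lemma subst_fm_good: "\<forall>x. \<sigma> x \<in> Dom \<Longrightarrow> etfree_fm A \<Longrightarrow> cl A \<Longrightarrow> etfree_fm (subst_fm \<sigma> A) \<and> cl (subst_fm \<sigma> A)"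
  using subst_fm_good_aux(2) by blast

theorem mainTheorem4:
  fixes m :: nat
    and A :: "('f, 'p) fm"
    and xs :: "nat list"
    and es :: "('f, 'p) tm list"
  assumes "m \<ge> 1"
    and "etfree_fm A" and "closed_fm 0 A"
    and "distinct xs" and "length es = length xs"
    and "\<forall>e\<in>set es. is_et_term e \<and> closed_tm 0 e"
    and "deriv_et m (subst_fm (subst_list xs es) A)"
  shows "\<exists>tss. tss \<noteq> [] \<and>
           (\<forall>ts\<in>set tss. length ts = length xs \<and>
              (\<forall>t\<in>set ts. etfree_tm t \<and> closed_tm 0 t)) \<and>
           deriv_L m (bigOr (map (\<lambda>ts. subst_fm (subst_list xs ts) A) tss))"
proof (rule ccontr)
  assume neg: "\<not> ?thesis"
  define I where "I ts = subst_fm (subst_list xs ts) A" for ts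
  define good where "good ts \<longleftrightarrow> length ts = length xs \<and> (\<forall>t\<in>set ts. etfree_tm t \<and> closed_tm 0 t)" for ts :: "('f,'p) tm list"
  define Dj where "Dj = {bigOr (map I tss) | tss. tss \<noteq> [] \<and> (\<forall>ts\<in>set tss. good ts)}"
  have goodI: "etfree_fm (I ts) \<and> cl (I ts)" if "good ts" for ts
  proof -
    have "\<forall>x. subst_list xs ts x \<in> Dom"
      using that by (intro allI subst_list_in[where P="\<lambda>t. t \<in> Dom"]) (auto simp: good_def Dom_def)
    then show ?thesis unfolding I_def using subst_fm_good assms(2,3) by blast
  qed
  have noder: "\<forall>\<delta>\<in>Dj. \<not> deriv False m \<delta>"
  proof
    fix \<delta> assume "\<delta> \<in> Dj"
    then obtain tss where t: "\<delta> = bigOr (map I tss)" "tss \<noteq> []" "\<forall>ts\<in>set tss. good ts" by (auto simp: Dj_def)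
    have Ieq: "I = (\<lambda>ts. subst_fm (subst_list xs ts) A)" by (simp add: I_def fun_eq_iff)
    show "\<not> deriv False m \<delta>" using neg t unfolding Ieq good_def by blast
  qed
  have clD: "\<forall>\<delta>\<in>Dj. cl \<delta>"
    using goodI by (auto simp: Dj_def intro!: cl_bigOr)
  have merge: "\<forall>\<delta>1\<in>Dj. \<forall>\<delta>2\<in>Dj. \<exists>\<delta>3\<in>Dj. dH m {} (Imp (Or \<delta>1 \<delta>2) \<delta>3)"
  proof (intro ballI)
    fix \<delta>1 \<delta>2 assume "\<delta>1 \<in> Dj" "\<delta>2 \<in> Dj"
    then obtain tss1 tss2 where t: "\<delta>1 = bigOr (map I tss1)" "tss1 \<noteq> []" "\<forall>ts\<in>set tss1. good ts"
      "\<delta>2 = bigOr (map I tss2)" "tss2 \<noteq> []" "\<forall>ts\<in>set tss2. good ts" by (auto simp: Dj_def)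
    have "dH m {} (Imp (Or \<delta>1 \<delta>2) (bigOr (map I tss1 @ map I tss2)))"
      unfolding t(1,4) using t goodI by (intro bigOr_merge) auto
    moreover have "bigOr (map I tss1 @ map I tss2) \<in> Dj"
      using t unfolding Dj_def by (auto intro!: exI[of _ "tss1 @ tss2"])
    ultimately show "\<exists>\<delta>3\<in>Dj. dH m {} (Imp (Or \<delta>1 \<delta>2) \<delta>3)" by blast
  qed
  obtain T where T: "clset T" "\<forall>\<delta>\<in>Dj. \<not> dH m T \<delta>" "\<forall>F. cl F \<longrightarrow> dH m T F \<longrightarrow> F \<in> T"
    "\<forall>B C. Or B C \<in> T \<longrightarrow> B \<in> T \<or> C \<in> T"
    using lindenbaum[OF noder merge clD] by blast
  have Dj1: "I ts \<in> Dj" if "good ts" for ts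
    using that unfolding Dj_def by (auto intro!: exI[of _ "[ts]"])
  define ts0 where "ts0 = replicate (length xs) (FVar 0 :: ('f,'p) tm)"
  have g0: "good ts0" by (simp add: good_def ts0_def)
  have noBot: "Bot \<notin> T"
  proof
    assume "Bot \<in> T"
    then have "dH m T (I ts0)" using goodI[OF g0] dH.mpH[OF dH_ax(10) dH.hypH] by blast
    then show False using T(2) Dj1[OF g0] by blast
  qed
  interpret lmodel T m
    using T noBot by unfold_locales auto
  define ts where "ts = map (ev_tm (\<lambda>X Y. Imp X Y \<in> T) []) es"
  have tsD: "\<forall>t\<in>set ts. t \<in> Dom" unfolding ts_def by (auto intro: evD)
  have gts: "good ts" using tsD assms(5) by (auto simp: good_def ts_def Dom_def)
  have s1: "Le TOP (EV (subst_fm (subst_list xs es) A))" using sound_et[OF assms(7)] by simp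
  have "\<forall>x. ev_tm (\<lambda>X Y. Imp X Y \<in> T) [] (subst_list xs es x) \<in> Dom" by (auto intro: evD)
  then have "EV (subst_fm (subst_list xs es) A) = EV (subst_fm (\<lambda>x. ev_tm (\<lambda>X Y. Imp X Y \<in> T) [] (subst_list xs es x)) A)"
    using ev_subst_fm assms(2,3) by blast
  also have "(\<lambda>x. ev_tm (\<lambda>X Y. Imp X Y \<in> T) [] (subst_list xs es x)) = subst_list xs ts"
    unfolding ts_def by (rule subst_list_map) simp
  finally have "Le TOP (EV (I ts))" using s1 by (simp add: I_def)
  moreover have "Le (EV (I ts)) (I ts)" using truth(2) goodI[OF gts] by blast
  ultimately have "Le TOP (I ts)" using Ltrans by blast
  then have "I ts \<in> T" by (rule topT)
  then show False using T(2) Dj1[OF gts] dH.hypH by blast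
qed

end
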